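(* Let $A\in\mathbb{R}^{m\times N}$, $\eta\ge 0$, let $x\in\mathbb{R}^N$ be nonzero and $k$-sparse, and let $y=Ax+\varepsilon$ with $\lVert\varepsilon\rVert_2\le\eta$. Let $1<q\le\infty$ and suppose $\rho_{q,3^{q/(q-1)}k}(A)>0$. Then any solution $\hat x$ of $$\min_{z\in\mathbb{R}^N\setminus\{0\}}\frac{\lVert z\rVert_1}{\lVert z\rVert_q}\quad\text{subject to}\quad \lVert y-Az\rVert_2\le\eta$$ obeys $$\lVert\hat x-x\rVert_q\le\frac{2\eta}{\rho_{q,3^{q/(q-1)}k}(A)},\qquad \lVert\hat x-x\rVert_1\le\frac{6k^{1-1/q}\eta}{\rho_{q,3^{q/(q-1)}k}(A)}.$$
   Context: For nonzero $z\in\mathbb{R}^N$ and $q\in(1,\infty)$, $s_q(z)=\left(\lVert z\rVert_1/\lVert z\rVert_q\right)^{q/(q-1)}$, and $s_\infty(z)=\lVert z\rVert_1/\lVert z\rVert_\infty$. For real $s\ge1$ and $q\in(1,\infty]$, the $q$-ratio constrained minimal singular value of $A$ is $\rho_{q,s}(A)=\min\{\lVert Az\rVert_2/\lVert z\rVert_q: z\ne0,\ s_q(z)\le s\}$. For $q=\infty$ interpret $q/(q-1)=1$ and $1-1/q=1$. A vector is $k$-sparse if it has at most $k$ nonzero entries. *)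

theory Defs
  imports "HOL-Analysis.Analysis" "HOL-Library.Extended_Real"
begin

text \<open>Exponent q ranges over (1, infinity], modelled as an extended real.\<close>

definition lq_norm :: "ereal \<Rightarrow> real ^ 'n \<Rightarrow> real" where
  "lq_norm q z = (if q = \<infinity> then Max (range (\<lambda>i. \<bar>z $ i\<bar>))
                  else (\<Sum>i\<in>UNIV. \<bar>z $ i\<bar> powr real_of_ereal q) powr (1 / real_of_ereal q))"

definition l1_norm :: "real ^ 'n \<Rightarrow> real" where
  "l1_norm z = (\<Sum>i\<in>UNIV. \<bar>z $ i\<bar>)"

definition sq_exp :: "ereal \<Rightarrow> real" where
  "sq_exp q = (if q = \<infinity> then 1 else real_of_ereal q / (real_of_ereal q - 1))"

definition one_minus_inv :: "ereal \<Rightarrow> real" where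
  "one_minus_inv q = (if q = \<infinity> then 1 else 1 - 1 / real_of_ereal q)"

definition s_q :: "ereal \<Rightarrow> real ^ 'n \<Rightarrow> real" where
  "s_q q z = (l1_norm z / lq_norm q z) powr sq_exp q"

definition rho :: "ereal \<Rightarrow> real \<Rightarrow> real ^ 'n ^ 'm \<Rightarrow> real" where
  "rho q s A = Inf {norm (A *v z) / lq_norm q z | z. z \<noteq> 0 \<and> s_q q z \<le> s}"

definition sparse :: "nat \<Rightarrow> real ^ 'n \<Rightarrow> bool" where
  "sparse k x \<longleftrightarrow> card {i. x $ i \<noteq> 0} \<le> k"

end

theory Submission
  imports Defs
begin

lemma powr_convex0:
  fixes p :: real assumes "p \<ge> 1"
  shows "convex_on {0..} (\<lambda>t::real. t powr p)"
proof (rule convex_onI)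
  show "convex {0::real..}" by simp
  fix t x y :: real
  assume t: "0 < t" "t < 1" and xy: "x \<in> {0..}" "y \<in> {0..}"
  show "((1 - t) *\<^sub>R x + t *\<^sub>R y) powr p \<le> (1 - t) * x powr p + t * y powr p"
  proof (cases "x = 0 \<or> y = 0")
    case False
    then have "x \<in> {0<..}" "y \<in> {0<..}" using xy by auto
    then show ?thesis using convex_onD[OF powr_convex[OF assms], of t x y] t by auto
  next
    case True
    have a: "s powr p \<le> s" if "0 \<le> s" "s \<le> 1" for s :: real
    proof (cases "s = 0")
      case False
      then have "s powr p \<le> s powr 1" using that assms
        by (intro powr_mono') auto
      then show ?thesis using that False by simp
    qed (use assms in simp)
    show ?thesis
    proof (cases "x = 0")
      case True
      have "((1 - t) *\<^sub>R x + t *\<^sub>R y) powr p = t powr p * y powr p"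
        using True t xy by (simp add: powr_mult)
      also have "\<dots> \<le> t * y powr p" using a[of t] t by (intro mult_right_mono) auto
      finally show ?thesis using True assms by simp
    next
      case False
      then have y0: "y = 0" using True by auto
      have "((1 - t) *\<^sub>R x + t *\<^sub>R y) powr p = (1-t) powr p * x powr p"
        using y0 t xy by (simp add: powr_mult)
      also have "\<dots> \<le> (1-t) * x powr p" using a[of "1-t"] t by (intro mult_right_mono) auto
      finally show ?thesis using y0 assms by simp
    qed
  qed
qed

definition Fp :: "real \<Rightarrow> real ^ 'n \<Rightarrow> real" where
  "Fp p z = (\<Sum>i\<in>UNIV. \<bar>z $ i\<bar> powr p)"

lemma Fp_nonneg: "Fp p z \<ge> 0" unfolding Fp_def by (intro sum_nonneg) auto

lemma Fp_convex:
  assumes p: "p \<ge> 1" and m: "0 \<le> m" "m \<le> 1"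
  shows "Fp p (m *\<^sub>R u + (1 - m) *\<^sub>R v) \<le> m * Fp p u + (1 - m) * Fp p v"
proof -
  have "\<bar>m * a + (1 - m) * b\<bar> powr p \<le> m * \<bar>a\<bar> powr p + (1 - m) * \<bar>b\<bar> powr p" for a b :: real
  proof -
    have "\<bar>m * a + (1 - m) * b\<bar> \<le> \<bar>m * a\<bar> + \<bar>(1 - m) * b\<bar>" by (rule abs_triangle_ineq)
    also have "\<dots> = m * \<bar>a\<bar> + (1 - m) * \<bar>b\<bar>" using m by (simp add: abs_mult)
    finally have "\<bar>m * a + (1 - m) * b\<bar> \<le> m * \<bar>a\<bar> + (1 - m) * \<bar>b\<bar>" .
    then have "\<bar>m * a + (1 - m) * b\<bar> powr p \<le> (m * \<bar>a\<bar> + (1 - m) * \<bar>b\<bar>) powr p"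
      using p by (intro powr_mono2) auto
    also have "\<dots> \<le> m * \<bar>a\<bar> powr p + (1 - m) * \<bar>b\<bar> powr p"
      using convex_onD[OF powr_convex0[OF p], of "1 - m" "\<bar>a\<bar>" "\<bar>b\<bar>"] m
      by (simp add: add.commute)
    finally show ?thesis .
  qed
  then show ?thesis unfolding Fp_def
    by (simp add: sum_distrib_left sum.distrib[symmetric] sum_mono)
qed

lemma Fp_scale:
  assumes "c \<ge> 0"
  shows "Fp p (c *\<^sub>R z) = c powr p * Fp p z"
  unfolding Fp_def using assms by (simp add: sum_distrib_left abs_mult powr_mult)

lemma Fp_zero: assumes "Fp p z = 0" shows "z = 0"
proof -
  have "\<forall>i\<in>UNIV. \<bar>z $ i\<bar> powr p = 0"
    using assms unfolding Fp_def by (subst sum_nonneg_eq_0_iff[symmetric]) auto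
  then show ?thesis by (simp add: vec_eq_iff)
qed

definition Np :: "real \<Rightarrow> real ^ 'n \<Rightarrow> real" where
  "Np p z = Fp p z powr (1 / p)"

lemma Np_nonneg: "Np p z \<ge> 0" unfolding Np_def by simp

lemma Np_zero: "Np p z = 0 \<Longrightarrow> z = 0" unfolding Np_def using Fp_zero by auto

lemma Np_pow: assumes "p > 0" shows "Np p z powr p = Fp p z"
  unfolding Np_def using assms Fp_nonneg[of p z] by (simp add: powr_powr)

lemma Np_scale: assumes "c \<ge> 0" "p > 0" shows "Np p (c *\<^sub>R z) = c * Np p z"
  unfolding Np_def Fp_scale[OF assms(1)] using assms Fp_nonneg[of p z]
  by (simp add: powr_mult powr_powr)

lemma Np_triangle:
  assumes p: "p \<ge> 1"
  shows "Np p (u + v) \<le> Np p u + Np p v"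
proof (cases "Np p u = 0 \<or> Np p v = 0")
  case True
  then show ?thesis using Np_zero[of p u] Np_zero[of p v] by auto
next
  case False
  define a where "a = Np p u"
  define b where "b = Np p v"
  have a: "a > 0" and b: "b > 0" using False Np_nonneg[of p u] Np_nonneg[of p v]
    unfolding a_def b_def by auto
  define m where "m = a / (a + b)"
  have m: "0 \<le> m" "m \<le> 1" using a b unfolding m_def by auto
  have "(1 / (a + b)) *\<^sub>R (u + v) = m *\<^sub>R ((1 / a) *\<^sub>R u) + (1 - m) *\<^sub>R ((1 / b) *\<^sub>R v)"
  proof -
    have e1: "m / a = 1 / (a + b)" and e2: "(1 - m) / b = 1 / (a + b)"
      using a b unfolding m_def by (auto simp add: field_simps) (smt (verit) mult_pos_pos)+
    show ?thesis by (simp add: scaleR_add_right e1 e2)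
  qed
  then have "Fp p ((1 / (a + b)) *\<^sub>R (u + v)) \<le> m * Fp p ((1 / a) *\<^sub>R u) + (1 - m) * Fp p ((1 / b) *\<^sub>R v)"
    using Fp_convex[OF p m, of "(1 / a) *\<^sub>R u" "(1 / b) *\<^sub>R v"] by simp
  also have "Fp p ((1 / a) *\<^sub>R u) = 1"
    using a p Np_scale[of "1/a" p u] Np_pow[of p "(1 / a) *\<^sub>R u"] unfolding a_def by simp
  also have "Fp p ((1 / b) *\<^sub>R v) = 1"
    using b p Np_scale[of "1/b" p v] Np_pow[of p "(1 / b) *\<^sub>R v"] unfolding b_def by simp
  finally have "Fp p ((1 / (a + b)) *\<^sub>R (u + v)) \<le> 1" by simp
  then have "Np p ((1 / (a + b)) *\<^sub>R (u + v)) \<le> 1"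
    unfolding Np_def using p by (simp add: powr_le1 Fp_nonneg)
  then have "(1 / (a + b)) * Np p (u + v) \<le> 1"
    using Np_scale[of "1 / (a + b)" p "u + v"] a b p by simp
  then show ?thesis using a b unfolding a_def[symmetric] b_def[symmetric] by (simp add: field_simps)
qed


lemma Np_card:
  assumes p: "p \<ge> 1"
  shows "(\<Sum>i\<in>S. \<bar>z $ i\<bar>) \<le> real (card S) powr (1 - 1 / p) * Np p z"
proof (cases "S = {}")
  case True then show ?thesis by (simp add: Np_nonneg)
next
  case False
  have fin: "finite S" by simp
  define n where "n = real (card S)"
  have n: "n > 0" using False fin unfolding n_def by (simp add: card_gt_0_iff)
  define A where "A = (\<Sum>i\<in>S. \<bar>z $ i\<bar>)"
  define G where "G = (\<Sum>i\<in>S. \<bar>z $ i\<bar> powr p)"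
  have A0: "A \<ge> 0" and G0: "G \<ge> 0" unfolding A_def G_def by (auto intro: sum_nonneg)
  have "(\<Sum>i\<in>S. (1 / n) *\<^sub>R \<bar>z $ i\<bar>) powr p \<le> (\<Sum>i\<in>S. (1 / n) * \<bar>z $ i\<bar> powr p)"
    by (rule convex_on_sum[OF fin False powr_convex0[OF p]]) (use n in \<open>auto simp: n_def\<close>)
  then have "(A / n) powr p \<le> G / n"
    unfolding A_def G_def by (simp add: sum_distrib_left[symmetric] sum_divide_distrib[symmetric])
  then have "((A / n) powr p) powr (1 / p) \<le> (G / n) powr (1 / p)"
    using p A0 n by (intro powr_mono2) auto
  then have "A / n \<le> (G / n) powr (1 / p)"
    using p A0 n by (simp add: powr_powr)
  then have "A \<le> n * (G / n) powr (1 / p)" using n by (simp add: field_simps)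
  also have "\<dots> = n powr (1 - 1 / p) * G powr (1 / p)"
    using n G0 by (simp add: powr_divide powr_diff field_simps)
  also have "\<dots> \<le> n powr (1 - 1 / p) * Np p z"
  proof (intro mult_left_mono)
    have "G \<le> Fp p z" unfolding G_def Fp_def by (intro sum_mono2) auto
    then show "G powr (1 / p) \<le> Np p z" unfolding Np_def using G0 p by (intro powr_mono2) auto
  qed simp
  finally show ?thesis unfolding A_def n_def .
qed

definition Ninf :: "real ^ 'n \<Rightarrow> real" where
  "Ninf z = Max (range (\<lambda>i. \<bar>z $ i\<bar>))"

lemma Ninf_ge: "\<bar>z $ i\<bar> \<le> Ninf z"
  unfolding Ninf_def by (rule Max_ge) auto

lemma Ninf_ex: "\<exists>i. Ninf z = \<bar>z $ i\<bar>"
proof -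
  have "Ninf z \<in> range (\<lambda>i. \<bar>z $ i\<bar>)" unfolding Ninf_def by (rule Max_in) auto
  then show ?thesis by auto
qed

lemma Ninf_nonneg: "Ninf z \<ge> 0" using Ninf_ge[of z] by (meson abs_ge_zero order_trans)

lemma Ninf_zero: "Ninf z = 0 \<Longrightarrow> z = 0"
  using Ninf_ge[of z] by (simp add: vec_eq_iff)

lemma Ninf_triangle: "Ninf (u + v) \<le> Ninf u + Ninf v"
proof -
  obtain i where "Ninf (u + v) = \<bar>(u + v) $ i\<bar>" using Ninf_ex by blast
  also have "\<dots> \<le> \<bar>u $ i\<bar> + \<bar>v $ i\<bar>" by (simp add: abs_triangle_ineq)
  also have "\<dots> \<le> Ninf u + Ninf v" by (intro add_mono Ninf_ge)
  finally show ?thesis .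
qed

lemma Ninf_card: "(\<Sum>i\<in>S. \<bar>z $ i\<bar>) \<le> real (card S) * Ninf z"
  using sum_bounded_above[of S "\<lambda>i. \<bar>z $ i\<bar>" "Ninf z"] Ninf_ge by auto

lemma lq_fin: fixes z :: "real ^ 'n"
  assumes "1 < q" "q \<noteq> \<infinity>"
  shows "lq_norm q z = Np (real_of_ereal q) z" "real_of_ereal q > 1"
  "one_minus_inv q = 1 - 1 / real_of_ereal q" "sq_exp q = real_of_ereal q / (real_of_ereal q - 1)"
  using assms by (cases q; auto simp: lq_norm_def Np_def Fp_def one_minus_inv_def sq_exp_def)+

lemma lq_inf: fixes z :: "real ^ 'n"
  assumes "q = \<infinity>"
  shows "lq_norm q z = Ninf z" "one_minus_inv q = 1" "sq_exp q = 1"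
  using assms by (auto simp: lq_norm_def Ninf_def one_minus_inv_def sq_exp_def)

lemma lq_nonneg: fixes z :: "real ^ 'n" shows "1 < q \<Longrightarrow> lq_norm q z \<ge> 0"
  by (cases "q = \<infinity>") (auto simp: lq_fin lq_inf Ninf_nonneg Np_nonneg)
lemma lq_zero: fixes z :: "real ^ 'n" shows "1 < q \<Longrightarrow> lq_norm q z = 0 \<Longrightarrow> z = 0"
  by (cases "q = \<infinity>") (auto simp: lq_fin lq_inf Ninf_zero Np_zero)
lemma lq_triangle: fixes u v :: "real ^ 'n" shows "1 < q \<Longrightarrow> lq_norm q (u + v) \<le> lq_norm q u + lq_norm q v"
proof (cases "q = \<infinity>")
  case False assume q: "1 < q"
  then show ?thesis using lq_fin(2)[OF q False] lq_fin(1)[OF q False, of u] lq_fin(1)[OF q False, of v]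
    lq_fin(1)[OF q False, of "u + v"] Np_triangle[of "real_of_ereal q" u v] by simp
qed (auto simp: lq_inf Ninf_triangle)
lemma lq_card: fixes z :: "real ^ 'n" shows "1 < q \<Longrightarrow> (\<Sum>i\<in>S. \<bar>z $ i\<bar>) \<le> real (card S) powr one_minus_inv q * lq_norm q z"
proof (cases "q = \<infinity>")
  case False assume q: "1 < q"
  then show ?thesis using lq_fin(2,3)[OF q False] lq_fin(1)[OF q False, of z]
    Np_card[where p="real_of_ereal q" and S=S and z=z] by simp
qed (auto simp: lq_inf Ninf_card)
lemma lq_exps: "1 < q \<Longrightarrow> one_minus_inv q > 0 \<and> sq_exp q > 0 \<and> one_minus_inv q * sq_exp q = 1"
proof (cases "q = \<infinity>")
  case False
  assume q: "1 < q"
  define p where "p = real_of_ereal q"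
  have p: "p > 1" "one_minus_inv q = 1 - 1 / p" "sq_exp q = p / (p - 1)"
    using lq_fin[OF q False] unfolding p_def by auto
  then show ?thesis unfolding p(2,3) by (simp add: field_simps)
qed (simp add: one_minus_inv_def sq_exp_def)


lemma lq_zero0: "1 < q \<Longrightarrow> lq_norm q (0 :: real ^ 'n) = 0"
  by (auto simp: lq_norm_def)

theorem theorem1:
  fixes A :: "real ^ 'n ^ 'm" and x xhat :: "real ^ 'n" and y \<epsilon> :: "real ^ 'm"
    and \<eta> :: real and k :: nat and q :: ereal
  assumes "\<eta> \<ge> 0"
    and "x \<noteq> 0" and "sparse k x"
    and "y = A *v x + \<epsilon>" and "norm \<epsilon> \<le> \<eta>"
    and "1 < q"
    and "rho q (3 powr sq_exp q * real k) A > 0"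
    and "xhat \<noteq> 0" and "norm (y - A *v xhat) \<le> \<eta>"
    and "\<forall>z. z \<noteq> 0 \<and> norm (y - A *v z) \<le> \<eta> \<longrightarrow>
           l1_norm xhat / lq_norm q xhat \<le> l1_norm z / lq_norm q z"
  shows "lq_norm q (xhat - x) \<le> 2 * \<eta> / rho q (3 powr sq_exp q * real k) A
    \<and> l1_norm (xhat - x) \<le> 6 * real k powr one_minus_inv q * \<eta> / rho q (3 powr sq_exp q * real k) A"
proof -
  note q = assms(6)
  define S where "S = {i. x $ i \<noteq> 0}"
  define e where "e = one_minus_inv q"
  define c where "c = real k powr e"
  define h where "h = xhat - x"
  define r where "r = rho q (3 powr sq_exp q * real k) A"
  define N :: "real ^ 'n \<Rightarrow> real" where "N = lq_norm q"
  have r: "r > 0" using assms(7) unfolding r_def .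
  have e: "e > 0" "e * sq_exp q = 1" "sq_exp q > 0" using lq_exps[OF q] unfolding e_def by auto
  have cardS: "card S \<le> k" using assms(3) unfolding sparse_def S_def .
  have "S \<noteq> {}" using assms(2) unfolding S_def by (auto simp: vec_eq_iff)
  then have "card S > 0" by (simp add: card_gt_0_iff)
  then have k: "k \<ge> 1" using cardS by simp
  have c0: "c \<ge> 0" unfolding c_def by simp
  have cS: "real (card S) powr e \<le> c" unfolding c_def using cardS e by (intro powr_mono2) auto
  have Sbound: "(\<Sum>i\<in>S. \<bar>z $ i\<bar>) \<le> c * N z" for z :: "real ^ 'n"
  proof -
    have "(\<Sum>i\<in>S. \<bar>z $ i\<bar>) \<le> real (card S) powr e * N z"
      using lq_card[OF q] unfolding e_def N_def .
    also have "\<dots> \<le> c * N z" using cS lq_nonneg[OF q, of z] unfolding N_def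
      by (intro mult_right_mono) auto
    finally show ?thesis .
  qed
  have split: "(\<Sum>i\<in>UNIV. f i) = (\<Sum>i\<in>S. f i) + (\<Sum>i\<in>UNIV - S. f i)" for f :: "'n \<Rightarrow> real"
    using sum.subset_diff[of S UNIV f] by simp
  have l1x: "l1_norm x = (\<Sum>i\<in>S. \<bar>x $ i\<bar>)"
    unfolding l1_norm_def split[of "\<lambda>i. \<bar>x $ i\<bar>"] by (simp add: S_def)
  have Nx: "N x > 0" using lq_nonneg[OF q, of x] lq_zero[OF q, of x] assms(2) unfolding N_def
    by fastforce
  have Nxh: "N xhat > 0" using lq_nonneg[OF q, of xhat] lq_zero[OF q, of xhat] assms(8) unfolding N_def
    by fastforce
  have Nh0: "N h \<ge> 0" unfolding N_def using lq_nonneg[OF q] .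
  have l1x_le: "l1_norm x \<le> c * N x" using Sbound[of x] l1x by simp
  have l1x0: "l1_norm x \<ge> 0" unfolding l1_norm_def by (auto intro: sum_nonneg)
  have opt: "l1_norm xhat / N xhat \<le> l1_norm x / N x"
    using assms(10) assms(2,4,5) unfolding N_def by auto
  then have opt2: "l1_norm xhat \<le> l1_norm x * N xhat / N x"
    using Nx Nxh by (simp add: field_simps)
  have tri: "N xhat \<le> N x + N h"
    using lq_triangle[OF q, of x h] unfolding N_def h_def by simp
  have claim1: "l1_norm xhat \<le> l1_norm x + c * N h"
  proof (cases "N xhat \<le> N x")
    case True
    have "l1_norm x * N xhat / N x \<le> l1_norm x"
      using True Nx l1x0 by (simp add: field_simps mult_left_mono)
    then show ?thesis using opt2 c0 Nh0 by (smt (verit) mult_nonneg_nonneg)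
  next
    case False
    have "l1_norm x * N xhat / N x = l1_norm x + (l1_norm x / N x) * (N xhat - N x)"
      using Nx by (simp add: field_simps)
    also have "\<dots> \<le> l1_norm x + c * (N xhat - N x)"
      using False l1x_le Nx by (intro add_left_mono mult_right_mono) (auto simp: field_simps)
    also have "\<dots> \<le> l1_norm x + c * N h"
      using tri c0 by (intro add_left_mono mult_left_mono) auto
    finally show ?thesis using opt2 by simp
  qed
  have xhat_eq: "xhat $ i = x $ i + h $ i" for i unfolding h_def by simp
  have hS: "(\<Sum>i\<in>UNIV - S. \<bar>h $ i\<bar>) = (\<Sum>i\<in>UNIV - S. \<bar>xhat $ i\<bar>)"
    by (intro sum.cong) (auto simp: S_def xhat_eq)
  have low: "(\<Sum>i\<in>S. \<bar>x $ i\<bar>) - (\<Sum>i\<in>S. \<bar>h $ i\<bar>) \<le> (\<Sum>i\<in>S. \<bar>xhat $ i\<bar>)"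
  proof -
    have "(\<Sum>i\<in>S. \<bar>x $ i\<bar> - \<bar>h $ i\<bar>) \<le> (\<Sum>i\<in>S. \<bar>xhat $ i\<bar>)"
      by (intro sum_mono) (simp add: xhat_eq abs_triangle_ineq4 [unfolded diff_conv_add_uminus] ; smt (verit))
    then show ?thesis by (simp add: sum_subtractf)
  qed
  have claim2: "l1_norm h \<le> 3 * c * N h"
  proof -
    have a: "l1_norm xhat = (\<Sum>i\<in>S. \<bar>xhat $ i\<bar>) + (\<Sum>i\<in>UNIV - S. \<bar>h $ i\<bar>)"
      unfolding l1_norm_def split[of "\<lambda>i. \<bar>xhat $ i\<bar>"] hS ..
    have b: "l1_norm h = (\<Sum>i\<in>S. \<bar>h $ i\<bar>) + (\<Sum>i\<in>UNIV - S. \<bar>h $ i\<bar>)"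
      unfolding l1_norm_def split[of "\<lambda>i. \<bar>h $ i\<bar>"] ..
    show ?thesis using a b claim1 low l1x Sbound[of h] by linarith
  qed
  have Ah: "norm (A *v h) \<le> 2 * \<eta>"
  proof -
    have "A *v h = \<epsilon> - (y - A *v xhat)"
      unfolding h_def assms(4) by (simp add: matrix_vector_mult_diff_distrib algebra_simps)
    then have "norm (A *v h) \<le> norm \<epsilon> + norm (y - A *v xhat)"
      by (simp add: norm_triangle_ineq4)
    then show ?thesis using assms(5,9) by simp
  qed
  show ?thesis
  proof (cases "h = 0")
    case True
    then show ?thesis using lq_zero0[where 'n='n, OF q] r assms(1) c0
      unfolding h_def[symmetric] r_def[symmetric] by (simp add: l1_norm_def)
  next
    case False
    have Nh: "N h > 0" using Nh0 lq_zero[OF q, of h] False unfolding N_def by fastforce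
    have l1h0: "l1_norm h \<ge> 0" unfolding l1_norm_def by (auto intro: sum_nonneg)
    have "s_q q h = (l1_norm h / N h) powr sq_exp q" unfolding s_q_def N_def ..
    also have "\<dots> \<le> (3 * c) powr sq_exp q"
      using claim2 Nh l1h0 e by (intro powr_mono2) (auto simp: field_simps)
    also have "\<dots> = 3 powr sq_exp q * real k"
      unfolding c_def using e k by (simp add: powr_mult powr_powr)
    finally have sq: "s_q q h \<le> 3 powr sq_exp q * real k" .
    have "r \<le> norm (A *v h) / N h"
      unfolding r_def rho_def
    proof (rule cInf_lower)
      show "norm (A *v h) / N h \<in> {norm (A *v z) / lq_norm q z |z. z \<noteq> 0 \<and> s_q q z \<le> 3 powr sq_exp q * real k}"
        using False sq unfolding N_def by blast
      show "bdd_below {norm (A *v z) / lq_norm q z |z. z \<noteq> 0 \<and> s_q q z \<le> 3 powr sq_exp q * real k}"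
        by (rule bdd_belowI[of _ 0]) (auto intro!: divide_nonneg_nonneg lq_nonneg[OF q])
    qed
    then have "r * N h \<le> norm (A *v h)" using Nh by (simp add: field_simps)
    then have Nhb: "N h \<le> 2 * \<eta> / r" using Ah r by (simp add: field_simps)
    have "l1_norm h \<le> 3 * c * (2 * \<eta> / r)"
      using claim2 Nhb c0 by (smt (verit) mult_left_mono)
    then have "l1_norm h \<le> 6 * c * \<eta> / r" by simp
    then show ?thesis using Nhb unfolding h_def N_def c_def e_def r_def by simp
  qed
qed

end
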